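(* In the storage model of the context, suppose the linear system \[ \sum_{j=1}^{\kappa_i}\alpha_{ij}=\lambda_i\ (i=1,\dots,\mathcal K),\qquad \sum_{i=1}^{\mathcal K}\sum_{j=1}^{\kappa_i}\alpha_{ij}\,\delta_{\ell,s^i_j}=\tfrac1n\ (\ell=1,\dots,n) \] has a positive solution $(\alpha_{ij})$, let $0<\varepsilon<\min_{i,j}\alpha_{ij}$, and let the embedded load chain $X^e(m)$ be constructed using the $\varepsilon$-PSERP. Then for every $x\in\mathbb N^n$, \[ \mathbf E[f(X^e(m+1))-f(X^e(m))\mid X^e(m)=x]=-2\varepsilon\sum_{i=1}^{\mathcal K}\bigl(x_{s^i_{j_{\max}}(x)}-x_{s^i_{j_{\min}}(x)}\bigr)+1-\frac1n, \] where $f(y)=\sum_{l=1}^n\bigl(y_l-\frac1n\sum_{k=1}^ny_k\bigr)^2$.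
   Context: Storage model: $n$ nodes, non-empty neighborhoods $S_1,\dots,S_{\mathcal K}\subset\{1,\dots,n\}$ covering $\{1,\dots,n\}$, $\kappa_i=|S_i|$, $S_i=\{s^i_1,\dots,s^i_{\kappa_i}\}$ a fixed enumeration. Items arrive at $S_i$ as independent Poisson processes with rates $\lambda_i>0$, $\sum_i\lambda_i=1$; each item is stored at one node of its neighborhood according to the routing policy, independently across arrivals. $X^e(m)\in\mathbb N^n$ is the vector of node loads after the $m$-th arrival. For $x\in\mathbb N^n$, $s^i_{j_{\min}}(x)$ is the first node of $S_i$ (in the enumeration) at which $x$ is minimal over $S_i$, and $s^i_{j_{\max}}(x)$ is the last node of $S_i$ at which $x$ is maximal over $S_i$. $\varepsilon$-PSERP: an item arriving at $S_i$ when the configuration is $x$ is sent to $s^i_j$ with probability $(\alpha_{ij}+\varepsilon)/\lambda_i$ if $s^i_j=s^i_{j_{\min}}(x)$, $(\alpha_{ij}-\varepsilon)/\lambda_i$ if $s^i_j=s^i_{j_{\max}}(x)$, and $\alpha_{ij}/\lambda_i$ otherwise; if $\kappa_i=1$ the item goes to the unique node of $S_i$. $\delta_{\ell,m}$ is the Kronecker delta. *)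

theory Defs
  imports "HOL-Probability.Probability"
begin

text \<open>Nodes are 0..n-1; neighbourhoods are indexed by i < K; the fixed enumeration
  of S_i is the distinct list S i (positions j < length (S i)). Loads are x :: nat => nat
  (only the coordinates l < n are relevant).\<close>

definition jmin :: "(nat \<Rightarrow> nat list) \<Rightarrow> (nat \<Rightarrow> nat) \<Rightarrow> nat \<Rightarrow> nat" where
  "jmin S x i = (LEAST j. j < length (S i) \<and> x (S i ! j) = Min (x ` set (S i)))"

definition jmax :: "(nat \<Rightarrow> nat list) \<Rightarrow> (nat \<Rightarrow> nat) \<Rightarrow> nat \<Rightarrow> nat" where
  "jmax S x i = (GREATEST j. j < length (S i) \<and> x (S i ! j) = Max (x ` set (S i)))"

definition pserp_prob ::
  "(nat \<Rightarrow> nat list) \<Rightarrow> (nat \<Rightarrow> real) \<Rightarrow> (nat \<Rightarrow> nat \<Rightarrow> real) \<Rightarrow> real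
    \<Rightarrow> (nat \<Rightarrow> nat) \<Rightarrow> nat \<Rightarrow> nat \<Rightarrow> real" where
  "pserp_prob S lam alpha eps x i j =
     (if length (S i) = 1 then 1
      else if j = jmin S x i then (alpha i j + eps) / lam i
      else if j = jmax S x i then (alpha i j - eps) / lam i
      else alpha i j / lam i)"

text \<open>Transition law of the embedded chain X^e: from configuration x, the next arrival
  is at S_i with probability lam i (= lam_i / sum of rates), and is stored at S i ! j
  with the PSERP probability; the new configuration is x with that node's load + 1.\<close>
definition pserp_step ::
  "nat \<Rightarrow> (nat \<Rightarrow> nat list) \<Rightarrow> (nat \<Rightarrow> real) \<Rightarrow> (nat \<Rightarrow> nat \<Rightarrow> real) \<Rightarrow> real
    \<Rightarrow> (nat \<Rightarrow> nat) \<Rightarrow> (nat \<Rightarrow> nat) pmf" where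
  "pserp_step K S lam alpha eps x =
     pmf_of_list (concat (map (\<lambda>i. map (\<lambda>j. (x(S i ! j := x (S i ! j) + 1),
                                           lam i * pserp_prob S lam alpha eps x i j))
                                    [0..<length (S i)]) [0..<K]))"

definition potential :: "nat \<Rightarrow> (nat \<Rightarrow> nat) \<Rightarrow> real" where
  "potential n y = (\<Sum>l<n. (real (y l) - (\<Sum>k<n. real (y k)) / real n)^2)"

end

theory Submission imports Defs begin

lemma sl_upt: "sum_list (map f [0..<K]) = (\<Sum>i<K. (f i::real))"
  by (induct K) auto

lemma pot_alt:
  assumes "n > 0"
  shows "potential n y = (\<Sum>l<n. real (y l)^2) - (\<Sum>l<n. real (y l))^2 / real n"
proof -
  define T where "T = (\<Sum>k<n. real (y k))"
  have "potential n y = (\<Sum>l<n. real (y l)^2 - 2 * (T / n) * real (y l) + (T/n)^2)"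
    unfolding potential_def T_def[symmetric] by (intro sum.cong refl) (simp add: power2_eq_square algebra_simps)
  also have "\<dots> = (\<Sum>l<n. real (y l)^2) - 2 * (T/n) * T + n * (T/n)^2"
    by (simp add: sum.distrib sum_subtractf sum_distrib_left T_def)
  also have "\<dots> = (\<Sum>l<n. real (y l)^2) - T^2 / n"
    using assms by (simp add: field_simps power2_eq_square)
  finally show ?thesis by (simp add: T_def)
qed

lemma pot_step:
  assumes "v < n"
  shows "potential n (y(v := y v + 1)) - potential n y
         = 2 * real (y v) + 1 - (2 * (\<Sum>l<n. real (y l)) + 1) / real n"
proof -
  have n: "n > 0" using assms by simp
  have e: "\<And>l. real ((y(v := y v + 1)) l) = real (y l) + (if l = v then 1 else 0)" by simp
  have s1: "(\<Sum>l<n. real ((y(v := y v + 1)) l)) = (\<Sum>l<n. real (y l)) + 1"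
    unfolding e using assms by (simp add: sum.distrib)
  have e2: "\<And>l. real ((y(v := y v + 1)) l)^2 = real (y l)^2 + (if l = v then 2 * real (y v) + 1 else 0)"
    by (simp add: power2_eq_square algebra_simps)
  have s2: "(\<Sum>l<n. real ((y(v := y v + 1)) l)^2) = (\<Sum>l<n. real (y l)^2) + 2 * real (y v) + 1"
    unfolding e2 using assms by (simp add: sum.distrib)
  show ?thesis
    unfolding pot_alt[OF n] s1 s2 using n
    by (simp add: field_simps power2_eq_square)
qed

lemma jmin_props:
  assumes "S i \<noteq> []"
  shows "jmin S x i < length (S i)" "x (S i ! jmin S x i) = Min (x ` set (S i))"
    "\<And>j. j < length (S i) \<Longrightarrow> x (S i ! j) = Min (x ` set (S i)) \<Longrightarrow> jmin S x i \<le> j"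
proof -
  have "Min (x ` set (S i)) \<in> x ` set (S i)" using assms by (intro Min_in) auto
  then obtain j where j: "j < length (S i)" "x (S i ! j) = Min (x ` set (S i))"
    by (auto simp: in_set_conv_nth)
  show "jmin S x i < length (S i)" "x (S i ! jmin S x i) = Min (x ` set (S i))"
    unfolding jmin_def using LeastI[of "\<lambda>j. j < length (S i) \<and> x (S i ! j) = Min (x ` set (S i))", OF conjI[OF j]] by auto
  show "\<And>j. j < length (S i) \<Longrightarrow> x (S i ! j) = Min (x ` set (S i)) \<Longrightarrow> jmin S x i \<le> j"
    unfolding jmin_def by (rule Least_le) auto
qed

lemma jmax_props:
  assumes "S i \<noteq> []"
  shows "jmax S x i < length (S i)" "x (S i ! jmax S x i) = Max (x ` set (S i))"
    "\<And>j. j < length (S i) \<Longrightarrow> x (S i ! j) = Max (x ` set (S i)) \<Longrightarrow> j \<le> jmax S x i"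
proof -
  have "Max (x ` set (S i)) \<in> x ` set (S i)" using assms by (intro Max_in) auto
  then obtain j where j: "j < length (S i)" "x (S i ! j) = Max (x ` set (S i))"
    by (auto simp: in_set_conv_nth)
  have b: "\<And>y. y < length (S i) \<and> x (S i ! y) = Max (x ` set (S i)) \<Longrightarrow> y \<le> length (S i)" by auto
  show "jmax S x i < length (S i)" "x (S i ! jmax S x i) = Max (x ` set (S i))"
    unfolding jmax_def using GreatestI_nat[of "\<lambda>j. j < length (S i) \<and> x (S i ! j) = Max (x ` set (S i))", OF conjI[OF j] b] by auto
  show "\<And>j. j < length (S i) \<Longrightarrow> x (S i ! j) = Max (x ` set (S i)) \<Longrightarrow> j \<le> jmax S x i"
    unfolding jmax_def by (rule Greatest_le_nat[OF _ b]) auto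
qed

lemma jmin_ne_jmax:
  assumes "length (S i) \<ge> 2"
  shows "jmin S x i \<noteq> jmax S x i"
proof
  assume eq: "jmin S x i = jmax S x i"
  have ne: "S i \<noteq> []" using assms by auto
  let ?A = "x ` set (S i)"
  have fin: "finite ?A" by simp
  have "Min ?A = Max ?A" using jmin_props(2)[where S=S and i=i and x=x, OF ne] jmax_props(2)[where S=S and i=i and x=x, OF ne] eq by simp
  hence all: "\<And>j. j < length (S i) \<Longrightarrow> x (S i ! j) = Min ?A \<and> x (S i ! j) = Max ?A"
    by (metis Max_ge Min_le fin image_eqI le_antisym nth_mem)
  have "jmin S x i \<le> 0" using jmin_props(3)[where S=S and i=i and x=x and j=0, OF ne] all[of 0] ne by simp
  moreover have "length (S i) - 1 \<le> jmax S x i" using jmax_props(3)[where S=S and i=i and x=x and j="length (S i) - 1", OF ne] all[of "length (S i) - 1"] ne by simp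
  ultimately show False using eq assms by simp
qed

lemma expect_pmf_of_list:
  assumes wf: "pmf_of_list_wf xs"
  shows "measure_pmf.expectation (pmf_of_list xs) f = sum_list (map (\<lambda>z. snd z * f (fst z)) xs)"
proof -
  have "measure_pmf.expectation (pmf_of_list xs) f = (\<Sum>a\<in>set (map fst xs). f a * pmf (pmf_of_list xs) a)"
    using set_pmf_of_list[OF wf] by (intro integral_measure_pmf_real) auto
  also have "\<dots> = (\<Sum>a\<in>set (map fst xs). (\<Sum>k = 0..<length xs. if fst (xs ! k) = a then snd (xs ! k) * f a else 0))"
    using wf by (intro sum.cong refl) (simp add: pmf_pmf_of_list sum_list_map_filter' sum_distrib_left sum_list_sum_nth[of "map _ xs"] mult.commute if_distrib cong: if_cong)
  also have "\<dots> = (\<Sum>k = 0..<length xs. (\<Sum>a\<in>set (map fst xs). if fst (xs ! k) = a then snd (xs ! k) * f a else 0))"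
    by (rule sum.swap)
  also have "\<dots> = (\<Sum>k = 0..<length xs. snd (xs ! k) * f (fst (xs ! k)))"
    by (intro sum.cong refl) (simp add: sum.delta)
  also have "\<dots> = sum_list (map (\<lambda>z. snd z * f (fst z)) xs)"
    by (simp add: sum_list_sum_nth)
  finally show ?thesis .
qed

lemma sum_list_concat': "sum_list (concat xss) = sum_list (map sum_list xss)"
  by (induct xss) simp_all

lemma sum_concat_upt:
  "sum_list (map g (concat (map (\<lambda>i. map (F i) [0..<L i]) [0..<K])))
   = (\<Sum>i<K. \<Sum>j<L i. (g (F i j) :: real))"
  by (simp add: map_concat o_def sl_upt sum_list_concat')

theorem lemma3p1:
  fixes n K :: nat and S :: "nat \<Rightarrow> nat list" and lam :: "nat \<Rightarrow> real"
    and alpha :: "nat \<Rightarrow> nat \<Rightarrow> real" and eps :: real and x :: "nat \<Rightarrow> nat"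
  assumes S_distinct: "\<And>i. i < K \<Longrightarrow> distinct (S i)"
    and S_nonempty: "\<And>i. i < K \<Longrightarrow> S i \<noteq> []"
    and S_nodes: "\<And>i. i < K \<Longrightarrow> set (S i) \<subseteq> {..<n}"
    and S_cover: "(\<Union>i<K. set (S i)) = {..<n}"
    and lam_pos: "\<And>i. i < K \<Longrightarrow> lam i > 0"
    and lam_sum: "(\<Sum>i<K. lam i) = 1"
    and alpha_pos: "\<And>i j. i < K \<Longrightarrow> j < length (S i) \<Longrightarrow> alpha i j > 0"
    and alpha_row: "\<And>i. i < K \<Longrightarrow> (\<Sum>j<length (S i). alpha i j) = lam i"
    and alpha_node: "\<And>l. l < n \<Longrightarrow>
           (\<Sum>i<K. \<Sum>j<length (S i). alpha i j * (if l = S i ! j then 1 else 0)) = 1 / real n"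
    and eps_pos: "0 < eps"
    and eps_lt: "\<And>i j. i < K \<Longrightarrow> j < length (S i) \<Longrightarrow> eps < alpha i j"
  shows "measure_pmf.expectation (pserp_step K S lam alpha eps x)
            (\<lambda>y. potential n y - potential n x)
         = - 2 * eps * (\<Sum>i<K. real (x (S i ! jmax S x i)) - real (x (S i ! jmin S x i)))
           + 1 - 1 / real n"
proof -
  let ?pp = "pserp_prob S lam alpha eps x"
  let ?L = "concat (map (\<lambda>i. map (\<lambda>j. (x(S i ! j := x (S i ! j) + 1),
                                           lam i * ?pp i j)) [0..<length (S i)]) [0..<K])"
  have Kpos: "K > 0" using lam_sum by (cases K) auto
  have npos: "n > 0" using S_nonempty[OF Kpos] S_nodes[OF Kpos] by (cases "S 0") auto
  have nodes: "\<And>i j. i < K \<Longrightarrow> j < length (S i) \<Longrightarrow> S i ! j < n"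
    using S_nodes nth_mem by blast
  have peri: "(\<Sum>j<length (S i). lam i * ?pp i j * h j)
      = (\<Sum>j<length (S i). alpha i j * h j) + eps * (h (jmin S x i) - h (jmax S x i))"
    if i: "i < K" for i and h :: "nat \<Rightarrow> real"
  proof (cases "length (S i) = 1")
    case True
    have ne: "S i \<noteq> []" using S_nonempty[OF i] .
    have "jmin S x i = 0" "jmax S x i = 0"
      using jmin_props(1)[where S=S and i=i and x=x, OF ne] jmax_props(1)[where S=S and i=i and x=x, OF ne] True by auto
    moreover have "alpha i 0 = lam i" using alpha_row[OF i] True by simp
    ultimately show ?thesis using True by (simp add: pserp_prob_def lessThan_Suc)
  next
    case False
    have ne: "S i \<noteq> []" using S_nonempty[OF i] .
    hence len2: "length (S i) \<ge> 2" using False by (cases "length (S i)") auto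
    have neq: "jmin S x i \<noteq> jmax S x i" by (rule jmin_ne_jmax[where S=S and i=i and x=x, OF len2])
    have lt1: "jmin S x i < length (S i)" and lt2: "jmax S x i < length (S i)"
      using jmin_props(1)[where S=S and i=i and x=x, OF ne] jmax_props(1)[where S=S and i=i and x=x, OF ne] by auto
    have l0: "lam i \<noteq> 0" using lam_pos[OF i] by simp
    have "\<And>j. lam i * ?pp i j * h j = alpha i j * h j
          + ((if j = jmin S x i then eps * h j else 0) - (if j = jmax S x i then eps * h j else 0))"
      using False neq l0 by (auto simp: pserp_prob_def field_simps)
    hence "(\<Sum>j<length (S i). lam i * ?pp i j * h j) = (\<Sum>j<length (S i). alpha i j * h j)
         + ((\<Sum>j<length (S i). if j = jmin S x i then eps * h j else 0) - (\<Sum>j<length (S i). if j = jmax S x i then eps * h j else 0))"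
      by (simp add: sum.distrib sum_subtractf)
    also have "\<dots> = (\<Sum>j<length (S i). alpha i j * h j) + eps * (h (jmin S x i) - h (jmax S x i))"
      using lt1 lt2 by (simp add: sum.delta' algebra_simps)
    finally show ?thesis .
  qed
  have wsum: "(\<Sum>j<length (S i). lam i * ?pp i j) = lam i" if "i < K" for i
    using peri[OF that, of "\<lambda>_. 1"] alpha_row[OF that] by simp
  have wnn: "lam i * ?pp i j \<ge> 0" if "i < K" "j < length (S i)" for i j
    using lam_pos[OF that(1)] eps_lt[OF that] eps_pos
    by (auto simp: pserp_prob_def intro!: mult_nonneg_nonneg divide_nonneg_pos)
  have wf: "pmf_of_list_wf ?L"
  proof (rule pmf_of_list_wfI)
    show "\<And>w. w \<in> set (map snd ?L) \<Longrightarrow> 0 \<le> w" using wnn by auto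
    have "sum_list (map snd ?L) = (\<Sum>i<K. \<Sum>j<length (S i). lam i * ?pp i j)"
      by (simp add: map_concat o_def sl_upt sum_list_concat')
    also have "\<dots> = 1" using wsum lam_sum by simp
    finally show "sum_list (map snd ?L) = 1" .
  qed
  define T where "T = (\<Sum>l<n. real (x l))"
  define c where "c = 1 - (2 * T + 1) / real n"
  have "measure_pmf.expectation (pserp_step K S lam alpha eps x) (\<lambda>y. potential n y - potential n x)
      = (\<Sum>i<K. \<Sum>j<length (S i). lam i * ?pp i j *
           (potential n (x(S i ! j := x (S i ! j) + 1)) - potential n x))"
    unfolding pserp_step_def expect_pmf_of_list[OF wf] by (simp add: map_concat o_def sl_upt sum_list_concat')
  also have "\<dots> = (\<Sum>i<K. \<Sum>j<length (S i). lam i * ?pp i j * (c + 2 * real (x (S i ! j))))"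
  proof (intro sum.cong refl)
    fix i j assume "i \<in> {..<K}" "j \<in> {..<length (S i)}"
    then have "S i ! j < n" using nodes by auto
    from pot_step[OF this, of x] show "lam i * ?pp i j *
           (potential n (x(S i ! j := x (S i ! j) + 1)) - potential n x) = lam i * ?pp i j * (c + 2 * real (x (S i ! j)))"
      by (simp add: c_def T_def)
  qed
  also have "\<dots> = (\<Sum>i<K. (\<Sum>j<length (S i). alpha i j * (c + 2 * real (x (S i ! j))))
        + eps * (2 * real (x (S i ! jmin S x i)) - 2 * real (x (S i ! jmax S x i))))"
    by (intro sum.cong refl) (simp add: peri)
  also have "\<dots> = c * (\<Sum>i<K. \<Sum>j<length (S i). alpha i j)
       + 2 * (\<Sum>i<K. \<Sum>j<length (S i). alpha i j * real (x (S i ! j)))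
       - 2 * eps * (\<Sum>i<K. real (x (S i ! jmax S x i)) - real (x (S i ! jmin S x i)))"
    by (simp add: sum.distrib sum_subtractf sum_distrib_left algebra_simps)
  also have "(\<Sum>i<K. \<Sum>j<length (S i). alpha i j) = 1"
    using alpha_row lam_sum by simp
  also have "(\<Sum>i<K. \<Sum>j<length (S i). alpha i j * real (x (S i ! j))) = T / real n"
  proof -
    have "(\<Sum>i<K. \<Sum>j<length (S i). alpha i j * real (x (S i ! j)))
        = (\<Sum>i<K. \<Sum>j<length (S i). \<Sum>l<n. real (x l) * (alpha i j * (if l = S i ! j then 1 else 0)))"
      using nodes by (intro sum.cong refl) (simp add: if_distrib sum.delta cong: if_cong)
    also have "\<dots> = (\<Sum>l<n. real (x l) * (\<Sum>i<K. \<Sum>j<length (S i). alpha i j * (if l = S i ! j then 1 else 0)))"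
      by (simp add: sum_distrib_left sum.swap[of _ "{..<n}"])
    also have "\<dots> = (\<Sum>l<n. real (x l) / real n)"
      by (intro sum.cong refl) (simp add: alpha_node)
    finally show ?thesis by (simp add: T_def sum_divide_distrib)
  qed
  finally show ?thesis using npos by (simp add: c_def field_simps)
qed

end
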